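(* Let $n\ge 2$ and let $\overrightarrow{K_{1,n}}$ be an orientation of the star $K_{1,n}$. Then $\overrightarrow{K_{1,n}}$ is $\{0,2\}$-antimagic if and only if its center is neither a source nor a sink.
   Context: An oriented graph $\overrightarrow{G}$ is a directed graph obtained from a simple undirected graph by giving each edge one direction. For vertices $u,v$, $d(u,v)$ is the length of a shortest directed path from $u$ to $v$ ($d(u,u)=0$, and $d(u,v)=\infty$ if there is no such path). Let $\partial=\max\{d(u,v)<\infty : u,v\in V(\overrightarrow{G})\}$. A distance set is a nonempty $D\subseteq\{0,1,\dots,\partial\}$. The $D$-neighborhood of $u$ is $N_D(u)=\{v : d(u,v)\in D\}$. For a bijection $f:V(\overrightarrow{G})\to\{1,\dots,|V(\overrightarrow{G})|\}$, the $D$-weight of $u$ is $\omega_D(u)=\sum_{v\in N_D(u)} f(v)$. $\overrightarrow{G}$ is $D$-antimagic if $D\subseteq\{0,\dots,\partial\}$ (in particular, $\{0,2\}$-antimagic requires $\partial\ge 2$) and there is such a bijection $f$ with all $D$-weights pairwise distinct. The center of $\overrightarrow{K_{1,n}}$ is its vertex of degree $n$; a source is a vertex of in-degree $0$ and a sink a vertex of out-degree $0$. *)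

theory Defs
  imports Main "HOL-Library.Extended_Nat"
begin

definition oriented_graph :: "'a set \<Rightarrow> ('a \<times> 'a) set \<Rightarrow> bool" where
  "oriented_graph V A \<longleftrightarrow> finite V \<and> A \<subseteq> V \<times> V \<and>
     (\<forall>u v. (u, v) \<in> A \<longrightarrow> u \<noteq> v \<and> (v, u) \<notin> A)"

definition odist :: "('a \<times> 'a) set \<Rightarrow> 'a \<Rightarrow> 'a \<Rightarrow> enat" where
  "odist A u v = (if (u, v) \<in> A\<^sup>* then enat (LEAST k. (u, v) \<in> A ^^ k) else \<infinity>)"

definition odiam :: "'a set \<Rightarrow> ('a \<times> 'a) set \<Rightarrow> nat" where
  "odiam V A = Max {k. \<exists>u\<in>V. \<exists>v\<in>V. odist A u v = enat k}"

definition D_nbhd :: "'a set \<Rightarrow> ('a \<times> 'a) set \<Rightarrow> nat set \<Rightarrow> 'a \<Rightarrow> 'a set" where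
  "D_nbhd V A D u = {v \<in> V. \<exists>k\<in>D. odist A u v = enat k}"

definition D_weight :: "'a set \<Rightarrow> ('a \<times> 'a) set \<Rightarrow> nat set \<Rightarrow> ('a \<Rightarrow> nat) \<Rightarrow> 'a \<Rightarrow> nat" where
  "D_weight V A D f u = (\<Sum>v\<in>D_nbhd V A D u. f v)"

definition D_antimagic :: "'a set \<Rightarrow> ('a \<times> 'a) set \<Rightarrow> nat set \<Rightarrow> bool" where
  "D_antimagic V A D \<longleftrightarrow> D \<noteq> {} \<and> D \<subseteq> {0..odiam V A} \<and>
     (\<exists>f. bij_betw f V {1..card V} \<and> inj_on (D_weight V A D f) V)"

definition oriented_star :: "'a set \<Rightarrow> ('a \<times> 'a) set \<Rightarrow> 'a \<Rightarrow> nat \<Rightarrow> bool" where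
  "oriented_star V A c n \<longleftrightarrow> oriented_graph V A \<and> c \<in> V \<and> card (V - {c}) = n \<and>
     {{u, v} | u v. (u, v) \<in> A} = {{c, l} | l. l \<in> V - {c}}"

definition is_source :: "('a \<times> 'a) set \<Rightarrow> 'a \<Rightarrow> bool" where
  "is_source A x \<longleftrightarrow> (\<forall>u. (u, x) \<notin> A)"

definition is_sink :: "('a \<times> 'a) set \<Rightarrow> 'a \<Rightarrow> bool" where
  "is_sink A x \<longleftrightarrow> (\<forall>u. (x, u) \<notin> A)"

end

theory Submission
  imports Defs
begin

lemma odist_eq_iff:
  "odist A u v = enat k \<longleftrightarrow> (u, v) \<in> A ^^ k \<and> (\<forall>j<k. (u, v) \<notin> A ^^ j)"
proof
  assume h: "odist A u v = enat k"
  then have st: "(u, v) \<in> A\<^sup>*" unfolding odist_def by (auto split: if_splits)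
  then have k: "k = (LEAST k. (u, v) \<in> A ^^ k)" using h unfolding odist_def by auto
  from st obtain m where "(u, v) \<in> A ^^ m" using rtrancl_power by blast
  then have "(u, v) \<in> A ^^ k" unfolding k by (rule LeastI)
  moreover have "\<forall>j<k. (u, v) \<notin> A ^^ j" unfolding k using not_less_Least by blast
  ultimately show "(u, v) \<in> A ^^ k \<and> (\<forall>j<k. (u, v) \<notin> A ^^ j)" by blast
next
  assume h: "(u, v) \<in> A ^^ k \<and> (\<forall>j<k. (u, v) \<notin> A ^^ j)"
  then have st: "(u, v) \<in> A\<^sup>*" using rtrancl_power by blast
  have "(LEAST k. (u, v) \<in> A ^^ k) = k"
    by (rule Least_equality) (use h in \<open>auto simp: not_less[symmetric]\<close>)
  then show "odist A u v = enat k" using st unfolding odist_def by simp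
qed

lemma relpow2: "A ^^ 2 = A O A"
  by (simp add: numeral_2_eq_2)

theorem mainTheorem4:
  fixes V :: "'a set" and A :: "('a \<times> 'a) set" and c :: 'a and n :: nat
  assumes "n \<ge> 2" and "oriented_star V A c n"
  shows "D_antimagic V A {0, 2} \<longleftrightarrow> \<not> is_source A c \<and> \<not> is_sink A c"
proof -
  have os: "oriented_graph V A \<and> c \<in> V \<and> card (V - {c}) = n \<and>
     {{u, v} | u v. (u, v) \<in> A} = {{c, l} | l. l \<in> V - {c}}"
    using assms(2) unfolding oriented_star_def .
  have og: "oriented_graph V A" using os by (rule conjunct1)
  have cV: "c \<in> V" using os[THEN conjunct2] by (rule conjunct1)
  have eq: "{{u, v} | u v. (u, v) \<in> A} = {{c, l} | l. l \<in> V - {c}}"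
    using os[THEN conjunct2, THEN conjunct2] by (rule conjunct2)
  have finV: "finite V" and AV: "A \<subseteq> V \<times> V"
    and orient: "\<And>u v. (u, v) \<in> A \<Longrightarrow> u \<noteq> v \<and> (v, u) \<notin> A"
    using og unfolding oriented_graph_def by auto
  have arcc: "u = c \<or> v = c" if "(u, v) \<in> A" for u v
  proof -
    have m: "{u, v} \<in> {{u, v} | u v. (u, v) \<in> A}" using that by blast
    have "{u, v} \<in> {{c, l} | l. l \<in> V - {c}}" using m by (simp only: eq)
    then obtain l where "{u, v} = {c, l}" by auto
    then show ?thesis by (auto simp: doubleton_eq_iff)
  qed
  have cover: "(c, l) \<in> A \<or> (l, c) \<in> A" if "l \<in> V" "l \<noteq> c" for l
  proof -
    have m: "{c, l} \<in> {{c, l} | l. l \<in> V - {c}}" using that by blast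
    have "{c, l} \<in> {{u, v} | u v. (u, v) \<in> A}" using m by (simp only: eq[symmetric])
    then obtain u v where "{c, l} = {u, v}" "(u, v) \<in> A" by auto
    then show ?thesis by (auto simp: doubleton_eq_iff)
  qed
  have comp: "(u, v) \<in> A O A \<longleftrightarrow> (u, c) \<in> A \<and> (c, v) \<in> A" for u v
  proof
    assume "(u, v) \<in> A O A"
    then obtain m where m: "(u, m) \<in> A" "(m, v) \<in> A" by blast
    have "m = c"
    proof (rule ccontr)
      assume "m \<noteq> c"
      then have "u = c" "v = c" using arcc m by blast+
      then show False using m orient by blast
    qed
    then show "(u, c) \<in> A \<and> (c, v) \<in> A" using m by simp
  qed auto
  have A3: "A ^^ 3 = {}"
  proof -
    have "A ^^ 3 = (A O A) O A" by (simp add: numeral_3_eq_3 relpow2[unfolded numeral_2_eq_2])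
    also have "\<dots> = {}"
    proof (rule ccontr)
      assume "(A O A) O A \<noteq> {}"
      then obtain u v w where "(u, v) \<in> A O A" "(v, w) \<in> A" by blast
      then have "(c, v) \<in> A" "(v, w) \<in> A" using comp by auto
      moreover have "v \<noteq> c" using orient calculation by blast
      ultimately show False using arcc orient by blast
    qed
    finally show ?thesis .
  qed
  have Abig: "A ^^ k = {}" if "k \<ge> 3" for k
  proof -
    have "A ^^ k = A ^^ (k - 3) O A ^^ 3" using that relpow_add[of "k-3" 3 A] by simp
    then show ?thesis using A3 by simp
  qed
  have d_le: "k \<le> 2" if "odist A u v = enat k" for u v k
    using that Abig unfolding odist_eq_iff by (metis empty_iff not_less_eq_eq numeral_2_eq_2 numeral_3_eq_3)
  have d0: "odist A u v = enat 0 \<longleftrightarrow> u = v" for u v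
    unfolding odist_eq_iff by simp
  have d2: "odist A u v = enat 2 \<longleftrightarrow> (u, c) \<in> A \<and> (c, v) \<in> A" for u v
  proof -
    have "(\<forall>j<2. (u, v) \<notin> A ^^ j)" if "(u, c) \<in> A \<and> (c, v) \<in> A"
    proof -
      have "u \<noteq> v" using that orient by blast
      moreover have "(u, v) \<notin> A" using that arcc orient by blast
      ultimately show ?thesis by (auto simp: less_2_cases_iff)
    qed
    then show ?thesis unfolding odist_eq_iff relpow2 comp by blast
  qed
  define S where "S = {k. \<exists>u\<in>V. \<exists>v\<in>V. odist A u v = enat k}"
  have S_sub: "S \<subseteq> {0, 1, 2}" unfolding S_def using d_le by fastforce
  have finS: "finite S" using S_sub finite_subset by blast
  have S0: "0 \<in> S" unfolding S_def using cV d0 by blast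
  have diam: "odiam V A = Max S" unfolding odiam_def S_def by simp
  show ?thesis
  proof
    assume am: "D_antimagic V A {0, 2}"
    then have "2 \<le> odiam V A" unfolding D_antimagic_def by auto
    moreover have "Max S \<in> S" using finS S0 Max_in[of S] by blast
    ultimately have "2 \<in> S" using diam S_sub by fastforce
    then obtain u v where "odist A u v = enat 2" unfolding S_def by auto
    then have "(u, c) \<in> A" "(c, v) \<in> A" using d2 by auto
    then show "\<not> is_source A c \<and> \<not> is_sink A c"
      unfolding is_source_def is_sink_def by blast
  next
    assume "\<not> is_source A c \<and> \<not> is_sink A c"
    then obtain x y where x: "(x, c) \<in> A" and y: "(c, y) \<in> A"
      unfolding is_source_def is_sink_def by blast
    have xV: "x \<in> V" and yV: "y \<in> V" using x y AV by auto
    have "2 \<in> S" unfolding S_def using xV yV d2 x y by blast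
    then have "2 \<le> odiam V A" unfolding diam using finS by simp
    then have Dsub: "{0, 2} \<subseteq> {0..odiam V A}" by auto
    define Out where "Out = {v. (c, v) \<in> A}"
    have OV: "Out \<subseteq> V" unfolding Out_def using AV by auto
    have finO: "finite Out" using OV finV finite_subset by blast
    have yO: "y \<in> Out" unfolding Out_def using y by simp
    have nb: "D_nbhd V A {0, 2} u = insert u (if (u, c) \<in> A then Out else {})" if "u \<in> V" for u
      unfolding D_nbhd_def Out_def using that d0 d2 AV by auto
    have uO: "u \<notin> Out" if "(u, c) \<in> A" for u
      unfolding Out_def using that orient by blast
    have cd: "card (V - {c}) = card {2..card V}"
      using finV cV by (simp add: card_Diff_singleton)
    obtain g where g: "bij_betw g (V - {c}) {2..card V}"
      using finite_same_card_bij[OF _ _ cd] finV by blast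
    define f where "f = g(c := 1)"
    have "bij_betw f (V - {c}) {2..card V}"
      using g bij_betw_cong[of "V - {c}" f g] unfolding f_def by auto
    moreover have "bij_betw f {c} {1}" unfolding f_def by simp
    ultimately have "bij_betw f ((V - {c}) \<union> {c}) ({2..card V} \<union> {1})"
      by (rule bij_betw_combine) auto
    moreover have "(V - {c}) \<union> {c} = V" using cV by auto
    moreover have "{2..card V} \<union> {1} = {1..card V}"
      using cV finV by (auto simp: card_gt_0_iff Suc_le_eq)
    ultimately have fb: "bij_betw f V {1..card V}" by simp
    have fc: "f c = 1" unfolding f_def by simp
    have fpos: "f v \<ge> 1" if "v \<in> V" for v
      using fb that unfolding bij_betw_def by auto
    have finj: "inj_on f V" using fb unfolding bij_betw_def by blast
    define T where "T = sum f Out"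
    have Ty: "f y \<le> T" unfolding T_def using finO yO by (simp add: member_le_sum)
    have w: "D_weight V A {0, 2} f u = f u + (if (u, c) \<in> A then T else 0)" if "u \<in> V" for u
      unfolding D_weight_def nb[OF that] T_def using uO finO by auto
    have "inj_on (D_weight V A {0, 2} f) V"
    proof (rule inj_onI)
      fix u w assume uV: "u \<in> V" and wV: "w \<in> V"
        and e: "D_weight V A {0, 2} f u = D_weight V A {0, 2} f w"
      have key: False if a: "(a, c) \<in> A" "(b, c) \<notin> A" "a \<in> V" "b \<in> V"
          "f a + T = f b" for a b
      proof (cases "b = c")
        case True
        then show False using a fc fpos[of a] Ty fpos[OF yV] by simp
      next
        case False
        then have "(c, b) \<in> A" using a cover by blast
        then have "b \<in> Out" unfolding Out_def by simp
        then have "f b \<le> T" unfolding T_def using finO by (simp add: member_le_sum)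
        then show False using a fpos[of a] by simp
      qed
      show "u = w"
      proof (cases "(u, c) \<in> A"; cases "(w, c) \<in> A")
        assume "(u, c) \<in> A" "(w, c) \<in> A"
        then have "f u = f w" using e w[OF uV] w[OF wV] by simp
        then show ?thesis using uV wV finj by (simp add: inj_on_eq_iff)
      next
        assume "(u, c) \<in> A" "(w, c) \<notin> A"
        moreover have "f u + T = f w" using e w[OF uV] w[OF wV] calculation by simp
        ultimately show ?thesis using key[of u w] uV wV by blast
      next
        assume "(u, c) \<notin> A" "(w, c) \<in> A"
        moreover have "f w + T = f u" using e w[OF uV] w[OF wV] calculation by simp
        ultimately show ?thesis using key[of w u] uV wV by blast
      next
        assume "(u, c) \<notin> A" "(w, c) \<notin> A"
        then have "f u = f w" using e w[OF uV] w[OF wV] by simp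
        then show ?thesis using uV wV finj by (simp add: inj_on_eq_iff)
      qed
    qed
    then show "D_antimagic V A {0, 2}" unfolding D_antimagic_def using Dsub fb by blast
  qed
qed

end
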